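(* Let $n\ge2$, $p\in(0,1/2)$, $q=1-p$, $\tilde q=1-2p$, and $\beta_n=2^{1/(n-1)}$. Let $X_1,\dots,X_n$ be i.i.d. with $P(X_i=1)=P(X_i=-1)=p$, $P(X_i=0)=1-2p$, and independently let $U_1,\dots,U_n$ be i.i.d. uniform on $[0,1]$ with order statistics $T_1<\dots<T_n$, $T_i$ being the arrival time of $X_i$. For $x\in[0,1]$, the $x$-strategy selects the first $X_i\neq0$ with $T_i>x$ (selecting nothing, i.e. losing, if there is none); it wins if the selected value is $1$ and no later-arriving variable equals $1$, or the selected value is $-1$ and no later-arriving variable equals $-1$. Then its win probability is $$p_n(x)=2\bigl((q+px)^n-(\tilde q+2px)^n\bigr).$$ If $p\ge\frac{\beta_n-1}{2\beta_n-1}$, then $p_n$ attains its maximum over $[0,1]$ at $x_n^\star=\frac{1}{p}\cdot\frac{q-\tilde q\beta_n}{2\beta_n-1}\in[0,1]$, with maximal value $$p_n(x_n^\star)=2(2\beta_n-1)^{1-n},$$ which does not depend on $p$. Moreover $p_n(x_n^\star)$ is decreasing in $n$ and converges to $1/2$ as $n\to\infty$. *)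

theory Defs
  imports "HOL-Probability.Probability"
begin

text \<open>Distribution of a single X_i: P(X=1)=P(X=-1)=p, P(X=0)=1-2p (valid for 0 \<le> p \<le> 1/2).\<close>
definition X_pmf :: "real \<Rightarrow> int pmf" where
  "X_pmf p = embed_pmf (\<lambda>k. if k = 1 \<or> k = -1 then p else if k = 0 then 1 - 2*p else 0)"

definition model :: "nat \<Rightarrow> real \<Rightarrow> ((nat \<Rightarrow> int) \<times> (nat \<Rightarrow> real)) measure" where
  "model n p = (PiM {..<n} (\<lambda>_. measure_pmf (X_pmf p)))
              \<Otimes>\<^sub>M (PiM {..<n} (\<lambda>_. uniform_measure lborel {0..1::real}))"

text \<open>Order statistics: T i is the (i+1)-th smallest of U_0..U_{n-1}; X_i arrives at time T i.\<close>
definition order_stat :: "nat \<Rightarrow> (nat \<Rightarrow> real) \<Rightarrow> nat \<Rightarrow> real" where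
  "order_stat n U i = sort (map U [0..<n]) ! i"

definition x_wins :: "nat \<Rightarrow> real \<Rightarrow> (nat \<Rightarrow> int) \<Rightarrow> (nat \<Rightarrow> real) \<Rightarrow> bool" where
  "x_wins n x X U \<longleftrightarrow>
     (\<exists>i<n. X i \<noteq> 0 \<and> order_stat n U i > x
        \<and> (\<forall>j<i. order_stat n U j > x \<longrightarrow> X j = 0)
        \<and> (\<forall>j. i < j \<and> j < n \<longrightarrow> X j \<noteq> X i))"

definition win_prob :: "nat \<Rightarrow> real \<Rightarrow> real \<Rightarrow> real" where
  "win_prob n p x = measure (model n p) {XU \<in> space (model n p). x_wins n x (fst XU) (snd XU)}"

definition p_n :: "nat \<Rightarrow> real \<Rightarrow> real \<Rightarrow> real" where
  "p_n n p x = 2 * (((1 - p) + p * x) ^ n - ((1 - 2*p) + 2 * p * x) ^ n)"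

definition beta :: "nat \<Rightarrow> real" where
  "beta n = 2 powr (1 / (real n - 1))"

definition x_star :: "nat \<Rightarrow> real \<Rightarrow> real" where
  "x_star n p = (1 / p) * (((1 - p) - (1 - 2*p) * beta n) / (2 * beta n - 1))"

definition opt_val :: "nat \<Rightarrow> real" where
  "opt_val n = 2 * (2 * beta n - 1) powr (1 - real n)"

end

theory Submission
  imports Defs
begin

lemma X_pmf_ok:
  assumes "0 \<le> p" "p \<le> 1/2"
  defines "f \<equiv> (\<lambda>k::int. if k = 1 \<or> k = -1 then p else if k = 0 then 1 - 2*p else 0)"
  shows "\<And>x. 0 \<le> f x" "(\<integral>\<^sup>+x. ennreal (f x) \<partial>count_space UNIV) = 1"
proof -
  show "\<And>x. 0 \<le> f x" using assms by (auto simp: f_def)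
  have "(\<integral>\<^sup>+x. ennreal (f x) \<partial>count_space UNIV) = (\<Sum>x\<in>{-1,0,1}. ennreal (f x))"
    by (rule nn_integral_count_space') (auto simp: f_def)
  also have "\<dots> = ennreal (p + (1-2*p) + p)" using assms
    by (simp add: f_def ennreal_plus[symmetric] del: ennreal_plus)
  finally show "(\<integral>\<^sup>+x. ennreal (f x) \<partial>count_space UNIV) = 1" by simp
qed

lemma pmf_X:
  assumes "0 \<le> p" "p \<le> 1/2"
  shows "pmf (X_pmf p) k = (if k = 1 \<or> k = -1 then p else if k = 0 then 1 - 2*p else 0)"
  unfolding X_pmf_def by (rule pmf_embed_pmf[OF X_pmf_ok[OF assms]])

lemma set_pmf_X:
  assumes "0 \<le> p" "p \<le> 1/2"
  shows "set_pmf (X_pmf p) \<subseteq> {-1,0,1}"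
  unfolding X_pmf_def set_embed_pmf[OF X_pmf_ok[OF assms]] by auto

lemma integral_X:
  assumes "0 \<le> p" "p \<le> 1/2"
  shows "(\<integral>v. f v \<partial>measure_pmf (X_pmf p)) = f (-1) * p + f 0 * (1 - 2*p) + f 1 * p"
  apply (subst integral_measure_pmf_real[of "{-1,0,1}"])
  using set_pmf_X[OF assms] by (auto simp: pmf_X[OF assms])


definition W :: "nat \<Rightarrow> nat \<Rightarrow> (nat \<Rightarrow> int) \<Rightarrow> bool" where
 "W n k X \<longleftrightarrow> (\<exists>i<n. X i \<noteq> 0 \<and> k \<le> i \<and> (\<forall>j<i. k \<le> j \<longrightarrow> X j = 0) \<and> (\<forall>j. i < j \<and> j < n \<longrightarrow> X j \<noteq> X i))"

definition HP :: "nat \<Rightarrow> nat \<Rightarrow> int \<Rightarrow> nat \<Rightarrow> int \<Rightarrow> bool" where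
 "HP k i s j v = (if j < k then True else if j < i then v = 0 else if j = i then v = s else v \<noteq> s)"

lemma prod_of_bool_lessThan: "(\<Prod>j<(n::nat). (of_bool (P j) :: real)) = of_bool (\<forall>j<n. P j)"
  by (induction n) (auto simp: less_Suc_eq)

lemma decomp:
  assumes X: "\<forall>j<n. X j \<in> {-1,0,1}"
  shows "(of_bool (W n k X) :: real) = (\<Sum>i\<in>{k..<n}. \<Sum>s\<in>{1,-1::int}. \<Prod>j<n. of_bool (HP k i s j (X j)))"
proof -
  define E where "E i s \<longleftrightarrow> (\<forall>j<n. HP k i s j (X j))" for i s
  have rhs: "(\<Sum>i\<in>{k..<n}. \<Sum>s\<in>{1,-1::int}. \<Prod>j<n. (of_bool (HP k i s j (X j)) :: real)) =
        (\<Sum>i\<in>{k..<n}. \<Sum>s\<in>{1,-1::int}. of_bool (E i s))"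
    unfolding E_def prod_of_bool_lessThan ..
  show ?thesis
  proof (cases "W n k X")
    case True
    then obtain i0 where i0: "i0 < n" "X i0 \<noteq> 0" "k \<le> i0" "\<forall>j<i0. k \<le> j \<longrightarrow> X j = 0"
       "\<forall>j. i0 < j \<and> j < n \<longrightarrow> X j \<noteq> X i0" unfolding W_def by blast
    have x1: "X i0 \<in> {1,-1}" using X i0 by auto
    have eq: "E i s \<longleftrightarrow> (i = i0 \<and> s = X i0)" if "i \<in> {k..<n}" "s \<in> {1,-1}" for i s
    proof
      assume e: "E i s"
      have xi: "X i = s" using e that unfolding E_def HP_def by (metis less_irrefl not_le atLeastLessThan_iff)
      have "i = i0"
      proof (rule ccontr)
        assume "i \<noteq> i0"
        then consider "i < i0" | "i0 < i" by linarith
        thus False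
        proof cases
          case 1 thus False using i0 that xi by auto
        next
          case 2
          have "HP k i s i0 (X i0)" using e i0 unfolding E_def by auto
          thus False using 2 i0 unfolding HP_def by auto
        qed
      qed
      thus "i = i0 \<and> s = X i0" using xi by simp
    next
      assume "i = i0 \<and> s = X i0"
      thus "E i s" using i0 unfolding E_def HP_def by auto
    qed
    have "(\<Sum>i\<in>{k..<n}. \<Sum>s\<in>{1,-1::int}. (of_bool (E i s) :: real))
        = (\<Sum>i\<in>{k..<n}. \<Sum>s\<in>{1,-1::int}. of_bool (i = i0 \<and> s = X i0))"
      using eq by (intro sum.cong refl) auto
    also have "\<dots> = (\<Sum>i\<in>{k..<n}. of_bool (i = i0))"
      using x1 by (intro sum.cong refl) auto
    also have "\<dots> = 1" using i0 by simp
    finally show ?thesis using rhs True by simp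
  next
    case False
    have "\<not> E i s" if "i \<in> {k..<n}" "s \<in> {1,-1}" for i s
    proof
      assume e: "E i s"
      have xi: "X i = s" using e that unfolding E_def HP_def by (metis less_irrefl not_le atLeastLessThan_iff)
      have "W n k X" unfolding W_def
      proof (intro exI[of _ i] conjI allI impI)
        show "i < n" "k \<le> i" using that by auto
        show "X i \<noteq> 0" using xi that by auto
        fix j
        show "j < i \<Longrightarrow> k \<le> j \<Longrightarrow> X j = 0" using e that unfolding E_def HP_def
          by (metis less_trans not_le atLeastLessThan_iff)
        show "i < j \<and> j < n \<Longrightarrow> X j \<noteq> X i" using e that xi unfolding E_def HP_def
          by (metis less_imp_not_less not_le atLeastLessThan_iff less_trans less_irrefl)
      qed
      thus False using False by simp
    qed
    hence "(\<Sum>i\<in>{k..<n}. \<Sum>s\<in>{1,-1::int}. (of_bool (E i s) :: real)) = 0"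
      by (intro sum.neutral ballI) auto
    thus ?thesis using rhs False by simp
  qed
qed


definition cc :: "real \<Rightarrow> nat \<Rightarrow> nat \<Rightarrow> nat \<Rightarrow> real" where
  "cc p k i j = (if j < k then 1 else if j < i then 1 - 2*p else if j = i then p else 1 - p)"

lemma prod_const_ivl: "(\<And>j. j \<in> {a..<b} \<Longrightarrow> f j = c) \<Longrightarrow> (\<Prod>j\<in>{a..<b}. f j) = (c::real) ^ (b - a)"
  by (simp add: prod.cong[of _ _ f "\<lambda>_. c"])

lemma prod_cc:
  assumes "k \<le> i" "i < n"
  shows "(\<Prod>j<n. cc p k i j) = (1-2*p)^(i-k) * p * (1-p)^(n-1-i)"
proof -
  have "(\<Prod>j<n. cc p k i j) = (\<Prod>j\<in>{0..<n}. cc p k i j)" by (simp add: atLeast0LessThan)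
  also have "\<dots> = (\<Prod>j\<in>{0..<k}. cc p k i j) * (\<Prod>j\<in>{k..<n}. cc p k i j)"
    using assms by (intro prod.atLeastLessThan_concat[symmetric]) auto
  also have "(\<Prod>j\<in>{k..<n}. cc p k i j) = (\<Prod>j\<in>{k..<i}. cc p k i j) * (\<Prod>j\<in>{i..<n}. cc p k i j)"
    using assms by (intro prod.atLeastLessThan_concat[symmetric]) auto
  also have "(\<Prod>j\<in>{i..<n}. cc p k i j) = cc p k i i * (\<Prod>j\<in>{Suc i..<n}. cc p k i j)"
    using assms by (intro prod.atLeast_Suc_lessThan) auto
  also have "(\<Prod>j\<in>{0..<k}. cc p k i j) = 1" by (subst prod_const_ivl[of _ _ _ 1]) (auto simp: cc_def)
  also have "(\<Prod>j\<in>{k..<i}. cc p k i j) = (1-2*p)^(i-k)" by (subst prod_const_ivl) (auto simp: cc_def)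
  also have "(\<Prod>j\<in>{Suc i..<n}. cc p k i j) = (1-p)^(n-Suc i)" using assms by (subst prod_const_ivl) (auto simp: cc_def)
  also have "cc p k i i = p" using assms by (simp add: cc_def)
  finally show ?thesis by simp
qed

lemma sum_geom:
  fixes p :: real
  assumes "k \<le> n"
  shows "(\<Sum>i\<in>{k..<n}. 2 * ((1-2*p)^(i-k) * p * (1-p)^(n-1-i))) = 2 * ((1-p)^(n-k) - (1-2*p)^(n-k))"
proof -
  have "(\<Sum>i\<in>{k..<n}. 2 * ((1-2*p)^(i-k) * p * (1-p)^(n-1-i)))
      = (\<Sum>r\<in>{0..<n-k}. 2 * ((1-2*p)^r * p * (1-p)^(n-k-Suc r)))"
    by (subst sum.atLeastLessThan_shift_0) (intro sum.cong refl, auto)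
  also have "\<dots> = 2 * p * (\<Sum>r<n-k. (1-p)^(n-k-Suc r) * (1-2*p)^r)"
    by (simp add: sum_distrib_left atLeast0LessThan mult_ac)
  moreover have pd: "(1-2*p)^(n-k) - (1-p)^(n-k) = ((1-2*p) - (1-p)) * (\<Sum>r<n-k. (1-p)^(n-k-Suc r) * (1-2*p)^r)"
    by (rule power_diff_sumr2)
  moreover have "(\<Sum>r<n-k. (1-p)^(n-k-Suc r) * (1-2*p)^r) * p = (1-p)^(n-k) - (1-2*p)^(n-k)"
    using pd by (simp add: algebra_simps)
  ultimately show ?thesis by (simp add: algebra_simps)
qed


lemma int_HP:
  assumes "0 \<le> p" "p \<le> 1/2" "s \<in> {1,-1}"
  shows "(\<integral>v. (of_bool (HP k i s j v) :: real) \<partial>measure_pmf (X_pmf p)) = cc p k i j"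
  using assms unfolding integral_X[OF assms(1,2)] by (auto simp: HP_def cc_def)

lemma X_sets:
  fixes n :: nat
  assumes "S \<subseteq> space (PiM {..<n} (\<lambda>_. measure_pmf (X_pmf p)))"
  shows "S \<in> sets (PiM {..<n} (\<lambda>_. measure_pmf (X_pmf p)))"
proof (rule sets.countable)
  have sp: "space (PiM {..<n} (\<lambda>_. measure_pmf (X_pmf p))) = PiE {..<n} (\<lambda>_. UNIV)"
    by (simp add: space_PiM)
  show "countable S"
    by (rule countable_subset[OF assms]) (auto simp: sp intro!: countable_PiE)
  fix a assume "a \<in> S"
  hence a: "a \<in> PiE {..<n} (\<lambda>_. UNIV)" using assms sp by auto
  have "{a} = PiE {..<n} (\<lambda>i. {a i})" using a
    by (auto simp: PiE_iff extensional_def fun_eq_iff) (metis lessThan_iff)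
  thus "{a} \<in> sets (PiM {..<n} (\<lambda>_. measure_pmf (X_pmf p)))"
    by (simp add: sets_PiM_I_finite)
qed

lemma X_measure:
  assumes p: "0 < p" "p < 1/2" and k: "k \<le> n"
  defines "M1 \<equiv> PiM {..<n} (\<lambda>_. measure_pmf (X_pmf p))"
  shows "measure M1 {X \<in> space M1. W n k X} = 2*((1-p)^(n-k) - (1-2*p)^(n-k))"
proof -
  interpret PP: product_prob_space "\<lambda>_. measure_pmf (X_pmf p)" "{..<n}"
    by unfold_locales
  have p2: "0 \<le> p" "p \<le> 1/2" using p by auto
  let ?S = "{X \<in> space M1. W n k X}"
  have S: "?S \<in> sets M1" unfolding M1_def by (rule X_sets) auto
  have eqS: "?S \<inter> space M1 = ?S" by auto
  have "measure M1 ?S = (\<integral>X. indicator ?S X \<partial>M1)" unfolding Bochner_Integration.integral_indicator eqS ..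
  also have "\<dots> = (\<integral>X. (\<Sum>i\<in>{k..<n}. \<Sum>s\<in>{1,-1::int}. \<Prod>j<n. (of_bool (HP k i s j (X j)) :: real)) \<partial>M1)"
  proof (rule integral_cong_AE)
    show "indicator ?S \<in> borel_measurable M1" using S by simp
    show "(\<lambda>X. \<Sum>i\<in>{k..<n}. \<Sum>s\<in>{1,-1::int}. \<Prod>j<n. (of_bool (HP k i s j (X j)) :: real)) \<in> borel_measurable M1"
      unfolding M1_def by measurable
    have "AE X in M1. \<forall>j\<in>{..<n}. X j \<in> {-1,0,1}"
      unfolding M1_def
    proof (rule AE_finite_allI)
      fix j assume j: "j \<in> {..<n}"
      show "AE X in PiM {..<n} (\<lambda>_. measure_pmf (X_pmf p)). X j \<in> {-1,0,1}"
        by (rule AE_PiM_component[OF _ j]) (use set_pmf_X[OF p2] in \<open>auto simp: AE_measure_pmf_iff prob_space_measure_pmf\<close>)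
    qed simp
    with AE_space have "AE X in M1. X \<in> space M1 \<and> (\<forall>j\<in>{..<n}. X j \<in> {-1,0,1})" by eventually_elim auto
    thus "AE X in M1. indicator ?S X = (\<Sum>i\<in>{k..<n}. \<Sum>s\<in>{1,-1::int}. \<Prod>j<n. (of_bool (HP k i s j (X j)) :: real))"
    proof eventually_elim
      case (elim X)
      thus ?case using decomp[of n X k] by (simp add: indicator_def)
    qed
  qed
  also have "\<dots> = (\<Sum>i\<in>{k..<n}. \<Sum>s\<in>{1,-1::int}. \<integral>X. (\<Prod>j<n. (of_bool (HP k i s j (X j)) :: real)) \<partial>M1)"
  proof -
    have intg: "integrable M1 (\<lambda>X. \<Prod>j<n. (of_bool (HP k i s j (X j)) :: real))" for i s
      unfolding M1_def by (rule PP.product_integrable_prod)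
        (auto simp: integrable_measure_pmf_finite finite_subset[OF set_pmf_X[OF p2]])
    show ?thesis
      apply (rule trans[OF Bochner_Integration.integral_sum[where f="\<lambda>i X. \<Sum>s\<in>{1,-1::int}. \<Prod>j<n. (of_bool (HP k i s j (X j)) :: real)"]])
       apply (rule Bochner_Integration.integrable_sum, rule intg)
      apply (rule sum.cong, rule refl)
      apply (rule Bochner_Integration.integral_sum[where f="\<lambda>s X. \<Prod>j<n. (of_bool (HP k _ s j (X j)) :: real)"], rule intg)
      done
  qed
  also have "\<dots> = (\<Sum>i\<in>{k..<n}. \<Sum>s\<in>{1,-1::int}. \<Prod>j<n. cc p k i j)"
    unfolding M1_def
    by (intro sum.cong refl, subst PP.product_integral_prod)
       (auto simp: int_HP[OF p2] integrable_measure_pmf_finite finite_subset[OF set_pmf_X[OF p2]])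
  also have "\<dots> = (\<Sum>i\<in>{k..<n}. 2 * ((1-2*p)^(i-k) * p * (1-p)^(n-1-i)))"
    by (intro sum.cong refl) (simp add: prod_cc)
  also have "\<dots> = 2*((1-p)^(n-k) - (1-2*p)^(n-k))" by (rule sum_geom[OF k])
  finally show ?thesis .
qed


definition Kc :: "nat \<Rightarrow> real \<Rightarrow> (nat \<Rightarrow> real) \<Rightarrow> nat" where
 "Kc n x U = card {j. j < n \<and> U j \<le> x}"

definition gg :: "real \<Rightarrow> real \<Rightarrow> real \<Rightarrow> real" where
 "gg x c u = (if u \<le> x then 1 else c)"

lemma Kc_le: "Kc n x U \<le> n"
  unfolding Kc_def by (rule order_trans[OF card_mono[of "{..<n}"]]) auto

lemma Kc_prod: "(\<Prod>j<n. gg x c (U j)) = c ^ (n - Kc n x U)"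
proof -
  have "(\<Prod>j<n. gg x c (U j)) = (\<Prod>j\<in>{..<n} \<inter> {j. U j \<le> x}. 1) * (\<Prod>j\<in>{..<n} \<inter> - {j. U j \<le> x}. c)"
    unfolding gg_def by (rule prod.If_cases) simp
  also have "\<dots> = c ^ card ({..<n} - {j. U j \<le> x})" by (simp add: Diff_eq)
  also have "card ({..<n} - {j. U j \<le> x}) = n - Kc n x U"
    unfolding Kc_def by (subst card_Diff_subset_Int) (auto intro!: arg_cong[where f="\<lambda>A. n - card A"])
  finally show ?thesis .
qed

abbreviation UU where "UU \<equiv> uniform_measure lborel {0..1::real}"

lemma UU_prob: "prob_space UU"
  by (rule prob_space_uniform_measure) simp_all

lemma int_gg:
  assumes "0 \<le> x" "x \<le> 1"
  shows "integrable UU (gg x c)" "(\<integral>u. gg x c u \<partial>UU) = c + (1-c)*x"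
proof -
  interpret prob_space UU by (rule UU_prob)
  have eq: "gg x c = (\<lambda>u. c + (1-c) * indicator {..x} u)"
    by (rule ext) (simp add: gg_def indicator_def)
  have fin: "emeasure UU {..x} < \<infinity>" by (simp add: emeasure_eq_measure)
  have intI: "integrable UU (indicator {..x} :: real \<Rightarrow> real)"
    using fin by (intro integrable_real_indicator) auto
  show "integrable UU (gg x c)" unfolding eq
    by (intro Bochner_Integration.integrable_add integrable_mult_right integrable_real_indicator fin) auto
  have m: "measure UU {..x} = x"
  proof -
    have "measure UU {..x} = measure lborel ({0..1} \<inter> {..x}) / measure lborel {0..1::real}"
      by (rule measure_uniform_measure) simp_all
    also have "{0..1} \<inter> {..x} = {0..x}" using assms by auto
    finally show ?thesis using assms by simp
  qed
  show "(\<integral>u. gg x c u \<partial>UU) = c + (1-c)*x" unfolding eq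
    by (subst Bochner_Integration.integral_add) (auto simp: fin m intI)
qed

lemma U_expect:
  assumes "0 \<le> x" "x \<le> 1"
  shows "integrable (PiM {..<n} (\<lambda>_. UU)) (\<lambda>U. \<Prod>j<n. gg x c (U j))"
        "(\<integral>U. (\<Prod>j<n. gg x c (U j)) \<partial>PiM {..<n} (\<lambda>_. UU)) = (c + (1-c)*x)^n"
proof -
  interpret PP: product_prob_space "\<lambda>_. UU" "{..<n}"
    by (simp add: product_prob_space_def product_sigma_finite_def product_prob_space_axioms_def
        UU_prob prob_space_imp_sigma_finite)
  show "integrable (PiM {..<n} (\<lambda>_. UU)) (\<lambda>U. \<Prod>j<n. gg x c (U j))"
    by (rule PP.product_integrable_prod) (auto simp: int_gg assms)
  show "(\<integral>U. (\<Prod>j<n. gg x c (U j)) \<partial>PiM {..<n} (\<lambda>_. UU)) = (c + (1-c)*x)^n"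
    by (subst PP.product_integral_prod) (auto simp: int_gg assms)
qed

lemma Kc_sets: "{U \<in> space (PiM {..<n} (\<lambda>_. UU)). Kc n x U = k} \<in> sets (PiM {..<n} (\<lambda>_. UU))"
proof -
  have "(\<lambda>U. real (Kc n x U)) \<in> borel_measurable (PiM {..<n} (\<lambda>_. UU))"
  proof -
    have "(\<lambda>U. real (Kc n x U)) = (\<lambda>U. \<Sum>j<n. indicator {..x} (U j))"
      by (rule ext) (simp add: Kc_def indicator_def sum.If_cases Int_def conj_commute)
    moreover have "(\<lambda>U. \<Sum>j<n. (indicator {..x} (U j) :: real)) \<in> borel_measurable (PiM {..<n} (\<lambda>_. UU))"
      by measurable
    ultimately show ?thesis by simp
  qed
  hence "{U \<in> space (PiM {..<n} (\<lambda>_. UU)). real (Kc n x U) = real k} \<in> sets (PiM {..<n} (\<lambda>_. UU))"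
    by measurable
  thus ?thesis by simp
qed


lemma sorted_gt_iff:
  fixes s :: "real list"
  assumes "sorted s" "i < length s"
  shows "x < s ! i \<longleftrightarrow> length (filter (\<lambda>u. u \<le> x) s) \<le> i"
  using assms
proof (induction s arbitrary: i)
  case Nil thus ?case by simp
next
  case (Cons a s)
  show ?case
  proof (cases i)
    case 0
    have "x < a \<longleftrightarrow> filter (\<lambda>u. u \<le> x) (a # s) = []"
      using Cons.prems(1) by (auto simp: filter_empty_conv)
    thus ?thesis using 0 by simp
  next
    case (Suc i')
    have i': "i' < length s" using Cons.prems Suc by simp
    show ?thesis
    proof (cases "a \<le> x")
      case True
      thus ?thesis using Cons.IH[of i'] Cons.prems i' Suc by simp
    next
      case False
      have all: "\<forall>u\<in>set s. x < u" using Cons.prems(1) False by auto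
      hence "filter (\<lambda>u. u \<le> x) s = []" by (auto simp: filter_empty_conv)
      moreover have "x < s ! i'" using all i' by auto
      ultimately show ?thesis using False Suc by simp
    qed
  qed
qed

lemma order_stat_gt:
  assumes "i < n"
  shows "x < order_stat n U i \<longleftrightarrow> Kc n x U \<le> i"
proof -
  have "x < order_stat n U i \<longleftrightarrow> length (filter (\<lambda>u. u \<le> x) (sort (map U [0..<n]))) \<le> i"
    unfolding order_stat_def by (rule sorted_gt_iff) (use assms in auto)
  also have "length (filter (\<lambda>u. u \<le> x) (sort (map U [0..<n]))) = length (filter (\<lambda>u. u \<le> x) (map U [0..<n]))"
    by (simp add: filter_sort)
  also have "\<dots> = Kc n x U"
    unfolding Kc_def length_filter_conv_card by (intro arg_cong[where f=card]) auto
  finally show ?thesis .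
qed

lemma x_wins_iff: "x_wins n x X U \<longleftrightarrow> W n (Kc n x U) X"
  unfolding x_wins_def W_def
  by (rule iffI; elim exE conjE; rule_tac x=i in exI;
      auto simp: order_stat_gt)


lemma win_prob_eq:
  assumes p: "0 < p" "p < 1/2" and x: "0 \<le> x" "x \<le> 1"
  shows "win_prob n p x = p_n n p x"
proof -
  define M1 where "M1 = PiM {..<n} (\<lambda>_. measure_pmf (X_pmf p))"
  define M2 where "M2 = PiM {..<n} (\<lambda>_. UU)"
  have model: "model n p = M1 \<Otimes>\<^sub>M M2" unfolding model_def M1_def M2_def ..
  interpret P1: prob_space M1 unfolding M1_def by (intro prob_space_PiM prob_space_measure_pmf)
  interpret P2: prob_space M2 unfolding M2_def by (intro prob_space_PiM UU_prob)
  interpret P12: pair_prob_space M1 M2 by unfold_locales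
  define A where "A = {XU \<in> space (M1 \<Otimes>\<^sub>M M2). x_wins n x (fst XU) (snd XU)}"
  have A_eq: "A = (\<Union>k\<in>{..n}. {X \<in> space M1. W n k X} \<times> {U \<in> space M2. Kc n x U = k})"
    unfolding A_def x_wins_iff space_pair_measure using Kc_le by fastforce
  have A_sets: "A \<in> sets (M1 \<Otimes>\<^sub>M M2)"
    unfolding A_eq
    by (intro sets.finite_UN pair_measureI finite_atMost ballI)
       (auto simp: M1_def M2_def intro: X_sets Kc_sets)
  define q where "q = 1 - p"
  define r where "r = 1 - 2*p"
  have qr: "0 \<le> r" "r \<le> q" using p by (auto simp: q_def r_def)
  define F where "F = (\<lambda>U. 2 * ((\<Prod>j<n. gg x q (U j)) - (\<Prod>j<n. gg x r (U j))))"
  have pre: "emeasure M1 ((\<lambda>X. (X, U)) -` A) = ennreal (F U)" if U: "U \<in> space M2" for U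
  proof -
    have "(\<lambda>X. (X, U)) -` A = {X \<in> space M1. W n (Kc n x U) X}"
      unfolding A_def x_wins_iff space_pair_measure using U by auto
    hence "emeasure M1 ((\<lambda>X. (X, U)) -` A) = ennreal (measure M1 {X \<in> space M1. W n (Kc n x U) X})"
      by (simp add: P1.emeasure_eq_measure)
    also have "measure M1 {X \<in> space M1. W n (Kc n x U) X} = 2*((1-p)^(n - Kc n x U) - (1-2*p)^(n - Kc n x U))"
      unfolding M1_def by (rule X_measure[OF p Kc_le])
    also have "\<dots> = F U" unfolding F_def Kc_prod q_def r_def ..
    finally show ?thesis .
  qed
  have intF: "integrable M2 F"
    unfolding F_def M2_def using U_expect(1)[OF x]
    by (intro integrable_mult_right Bochner_Integration.integrable_diff) auto
  have Fnn: "0 \<le> F U" for U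
  proof -
    have "r ^ (n - Kc n x U) \<le> q ^ (n - Kc n x U)" using qr by (intro power_mono) auto
    thus ?thesis unfolding F_def Kc_prod by simp
  qed
  have "emeasure (M1 \<Otimes>\<^sub>M M2) A = (\<integral>\<^sup>+U. emeasure M1 ((\<lambda>X. (X, U)) -` A) \<partial>M2)"
    by (rule P12.emeasure_pair_measure_alt2[OF A_sets])
  also have "\<dots> = (\<integral>\<^sup>+U. ennreal (F U) \<partial>M2)"
    by (rule nn_integral_cong) (simp add: pre)
  also have "\<dots> = ennreal (\<integral>U. F U \<partial>M2)"
    by (rule nn_integral_eq_integral[OF intF]) (simp add: Fnn)
  finally have em: "emeasure (M1 \<Otimes>\<^sub>M M2) A = ennreal (\<integral>U. F U \<partial>M2)" .
  have "(\<integral>U. F U \<partial>M2) = 2 * ((q + (1-q)*x)^n - (r + (1-r)*x)^n)"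
    unfolding F_def M2_def using U_expect[OF x]
    by (simp add: Bochner_Integration.integral_diff)
  also have "\<dots> = p_n n p x" unfolding p_n_def q_def r_def by (simp add: algebra_simps)
  finally have ip: "(\<integral>U. F U \<partial>M2) = p_n n p x" .
  have "0 \<le> (\<integral>U. F U \<partial>M2)" by (rule Bochner_Integration.integral_nonneg) (simp add: Fnn)
  hence "measure (M1 \<Otimes>\<^sub>M M2) A = p_n n p x"
    using em ip by (simp add: measure_def)
  thus ?thesis unfolding win_prob_def model A_def .
qed


lemma beta_props:
  assumes "n \<ge> 2"
  shows "beta n \<ge> 1" "beta n ^ (n-1) = 2"
proof -
  have "real n - 1 > 0" using assms by simp
  show "beta n \<ge> 1" unfolding beta_def using \<open>real n - 1 > 0\<close> by (simp add: ge_one_powr_ge_zero)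
  have "beta n ^ (n-1) = 2 powr ((1 / (real n - 1)) * real (n-1))"
    unfolding beta_def by (simp add: powr_realpow[symmetric] powr_powr)
  also have "(1 / (real n - 1)) * real (n-1) = 1" using assms by (simp add: of_nat_diff)
  finally show "beta n ^ (n-1) = 2" by simp
qed

lemma phi_max:
  assumes n: "n \<ge> 2" and a: "1/2 \<le> a" "a \<le> (1::real)"
  defines "b \<equiv> beta n"
  shows "a^n - (2*a-1)^n \<le> (b/(2*b-1))^n - (1/(2*b-1))^n"
proof -
  have b1: "b \<ge> 1" and bp: "b^(n-1) = 2" using beta_props[OF n] by (auto simp: b_def)
  define as where "as = b/(2*b-1)"
  have as1: "2*as - 1 = 1/(2*b-1)" using b1 by (simp add: as_def field_simps)
  have ash: "1/2 \<le> as" "as \<le> 1" using b1 by (auto simp: as_def field_simps)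
  define f where "f = (\<lambda>a::real. a^n - (2*a-1)^n)"
  define f' where "f' = (\<lambda>a::real. real n * a^(n-1) - 2 * real n * (2*a-1)^(n-1))"
  have der: "DERIV f x :> f' x" for x
    unfolding f_def f'_def by (auto intro!: derivative_eq_intros simp: algebra_simps)
  have key: "f' x \<ge> 0" if "1/2 \<le> x" "x \<le> as" for x
  proof -
    have "b*(2*x-1) \<le> x" using that b1 by (simp add: as_def field_simps)
    hence "(b*(2*x-1))^(n-1) \<le> x^(n-1)" by (rule power_mono) (use that b1 in auto)
    hence "2*(2*x-1)^(n-1) \<le> x^(n-1)" unfolding power_mult_distrib bp .
    thus ?thesis unfolding f'_def
      by (metis mult.assoc mult_left_mono diff_ge_0_iff_ge of_nat_0_le_iff mult.left_commute)
  qed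
  have key2: "f' x \<le> 0" if "as \<le> x" "x \<le> 1" for x
  proof -
    have x0: "2*x-1 \<ge> 0" using that ash by simp
    have "x \<le> b*(2*x-1)" using that b1 by (simp add: as_def field_simps)
    hence "x^(n-1) \<le> (b*(2*x-1))^(n-1)" by (rule power_mono) (use that ash in auto)
    hence "x^(n-1) \<le> 2*(2*x-1)^(n-1)" unfolding power_mult_distrib bp .
    thus ?thesis unfolding f'_def
      by (metis mult.assoc mult_left_mono diff_le_0_iff_le of_nat_0_le_iff mult.left_commute)
  qed
  have "f a \<le> f as"
  proof (cases "a \<le> as")
    case True
    show ?thesis by (rule DERIV_nonneg_imp_nondecreasing[OF True]) (use der key a in \<open>fastforce intro: exI[of _ "f' _"]\<close>)
  next
    case False
    have "f a \<le> f as"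
      apply (rule DERIV_nonpos_imp_nonincreasing[of as a f])
      using False apply simp
      subgoal for x using der[of x] key2[of x] a by auto
      done
    thus ?thesis .
  qed
  thus ?thesis unfolding f_def as1[symmetric] as_def by simp
qed


lemma part2:
  assumes n: "n \<ge> 2" and p: "0 < p" "p < 1/2" and pb: "p \<ge> (beta n - 1) / (2 * beta n - 1)"
  shows "x_star n p \<in> {0..1}
          \<and> (\<forall>x\<in>{0..1}. p_n n p x \<le> p_n n p (x_star n p))
          \<and> p_n n p (x_star n p) = opt_val n"
proof -
  define b where "b = beta n"
  have b1: "b \<ge> 1" and bp: "b^(n-1) = 2" using beta_props[OF n] by (auto simp: b_def)
  have d: "2*b - 1 \<ge> 1" using b1 by simp
  have pb': "b - 1 \<le> p * (2*b - 1)" using pb d unfolding b_def[symmetric] by (simp add: field_simps)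
  have xs: "x_star n p = (1/p) * (((1-p) - (1-2*p)*b) / (2*b-1))" unfolding x_star_def b_def ..
  have x0: "0 \<le> x_star n p" unfolding xs using p d pb' by (intro mult_nonneg_nonneg divide_nonneg_pos) (auto simp: algebra_simps)
  have x1: "x_star n p \<le> 1"
  proof -
    have "((1-p) - (1-2*p)*b) / (2*b-1) \<le> p" using d b1 p by (simp add: field_simps)
    hence "(1/p) * (((1-p) - (1-2*p)*b) / (2*b-1)) \<le> (1/p) * p" using p by (intro mult_left_mono) auto
    thus ?thesis unfolding xs using p by simp
  qed
  have pn: "p_n n p x = 2 * ((1-p+p*x)^n - (2*(1-p+p*x)-1)^n)" for x
    unfolding p_n_def by (simp add: algebra_simps)
  have astar: "1-p+p*x_star n p = b/(2*b-1)" unfolding xs using p d by (simp add: field_simps)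
  have astar2: "2*(b/(2*b-1)) - 1 = 1/(2*b-1)" using d by (simp add: field_simps)
  have max: "p_n n p x \<le> p_n n p (x_star n p)" if x: "x \<in> {0..1}" for x
  proof -
    have "(1-p+p*x)^n - (2*(1-p+p*x)-1)^n \<le> (b/(2*b-1))^n - (1/(2*b-1))^n"
    proof -
      have "0 \<le> p*x" "p*x \<le> p" using x p by (auto intro: mult_left_le)
      thus ?thesis unfolding b_def using p by (intro phi_max[OF n]) auto
    qed
    thus ?thesis unfolding pn astar astar2 by simp
  qed
  have bn: "b^n = 2*b" using bp n by (metis mult.commute power_minus_mult le_trans one_le_numeral not_numeral_le_zero zero_less_iff_neq_zero le0 Suc_leI one_le_numeral power_Suc[symmetric] Suc_diff_1 numeral_le_one_iff)
  have val: "p_n n p (x_star n p) = opt_val n"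
  proof -
    have "p_n n p (x_star n p) = 2 * ((b/(2*b-1))^n - (1/(2*b-1))^n)" unfolding pn astar astar2 ..
    also have "\<dots> = 2 * ((b^n - 1) / (2*b-1)^n)" by (simp add: power_divide diff_divide_distrib)
    also have "\<dots> = 2 * ((2*b-1) / (2*b-1)^n)" by (simp add: bn)
    also have "(2*b-1) / (2*b-1)^n = (2*b-1) powr (1 - real n)"
      using d by (simp add: powr_diff powr_realpow)
    finally show ?thesis unfolding opt_val_def b_def .
  qed
  show ?thesis using x0 x1 max val by auto
qed


definition hh :: "real \<Rightarrow> real" where "hh t = ln (2 * 2 powr t - 1)"
definition hh' :: "real \<Rightarrow> real" where "hh' t = 2 * 2 powr t * ln 2 / (2 * 2 powr t - 1)"

lemma hh_deriv: "t \<ge> 0 \<Longrightarrow> DERIV hh t :> hh' t"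
proof -
  assume t: "t \<ge> 0"
  have "2 powr t \<ge> (1::real)" using t by (simp add: ge_one_powr_ge_zero)
  hence pos: "2 * 2 powr t - 1 > (0::real)" by simp
  show ?thesis unfolding hh_def hh'_def
    by (rule derivative_eq_intros refl | use pos in simp)+
qed

lemma hh'_mono: assumes "0 \<le> a" "a < b" shows "hh' b < hh' a"
proof -
  have ua: "2 powr a \<ge> (1::real)" using assms by (simp add: ge_one_powr_ge_zero)
  have ab: "2 powr a < (2::real) powr b" using assms by simp
  define u where "u = 2 * 2 powr a" 
  define v where "v = 2 * 2 powr b"
  have u1: "u > 1" "u < v" using ua ab by (auto simp: u_def v_def)
  have "v / (v-1) < u / (u-1)" using u1 by (simp add: field_simps)
  hence "v / (v-1) * ln 2 < u / (u-1) * ln 2" by (rule mult_strict_right_mono) simp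
  thus ?thesis unfolding hh'_def u_def[symmetric] v_def[symmetric] times_divide_eq_left .
qed

lemma hh0: "hh 0 = 0" by (simp add: hh_def)

lemma hh_ratio: assumes "0 < s" "s < t" shows "hh t / t < hh s / s"
proof -
  obtain z1 where z1: "0 < z1" "z1 < s" "hh s - hh 0 = (s - 0) * hh' z1"
    using MVT2[of 0 s hh hh'] assms hh_deriv by auto
  obtain z2 where z2: "s < z2" "z2 < t" "hh t - hh s = (t - s) * hh' z2"
    using MVT2[of s t hh hh'] assms hh_deriv by auto
  have lt: "hh' z2 < hh' z1" using z1 z2 by (intro hh'_mono) auto
  have hs: "hh s = s * hh' z1" using z1 hh0 by simp
  have "hh t = s * hh' z1 + (t - s) * hh' z2" using z2 hs by simp
  also have "\<dots> < s * hh' z1 + (t - s) * hh' z1" using lt assms by simp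
  also have "\<dots> = t * (hh s / s)" using hs assms by (simp add: field_simps)
  finally show ?thesis using assms by (simp add: field_simps)
qed

lemma opt_val_exp: assumes "m \<ge> 2" shows "opt_val m = 2 * exp (- (hh (1/(real m - 1)) / (1/(real m - 1))))"
proof -
  have pos: "2 * beta m - 1 > 0" unfolding beta_def using assms
    by (smt (verit) ge_one_powr_ge_zero of_nat_1 of_nat_le_iff divide_nonneg_nonneg one_le_numeral)
  show ?thesis unfolding opt_val_def hh_def beta_def[symmetric] using pos
    by (simp add: powr_def algebra_simps)
qed

lemma opt_val_dec: assumes "m \<ge> 2" shows "opt_val (Suc m) < opt_val m"
proof -
  have "hh (1/(real m - 1)) / (1/(real m - 1)) < hh (1/(real (Suc m) - 1)) / (1/(real (Suc m) - 1))"
    using assms by (intro hh_ratio) (auto simp: field_simps)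
  thus ?thesis using assms by (simp add: opt_val_exp del: of_nat_Suc)
qed

lemma tm_lim: "filterlim (\<lambda>m::nat. 1/(real m - 1)) (at 0) sequentially"
proof (rule filterlim_atI)
  have "filterlim (\<lambda>m::nat. (-1) + real m) at_top sequentially"
    by (rule filterlim_tendsto_add_at_top[OF tendsto_const filterlim_real_sequentially])
  moreover have eq: "(\<lambda>m::nat. real m - 1) = (\<lambda>m. (-1) + real m)" by (rule ext) simp
  ultimately have "filterlim (\<lambda>m::nat. real m - 1) at_top sequentially" by (subst eq)
  hence "((\<lambda>m::nat. inverse (real m - 1)) \<longlongrightarrow> 0) sequentially"
    by (rule tendsto_inverse_0_at_top)
  thus "((\<lambda>m::nat. 1/(real m - 1)) \<longlongrightarrow> 0) sequentially" by (simp add: inverse_eq_divide)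
  show "\<forall>\<^sub>F m in sequentially. 1 / (real m - 1) \<noteq> 0"
    using eventually_ge_at_top[of 2] by eventually_elim simp
qed

lemma hh_quot: "((\<lambda>t. hh t / t) \<longlongrightarrow> 2 * ln 2) (at 0)"
proof -
  have "DERIV hh 0 :> hh' 0" by (rule hh_deriv) simp
  hence "((\<lambda>t. (hh (0 + t) - hh 0) / t) \<longlongrightarrow> hh' 0) (at 0)" by (simp add: DERIV_def)
  thus ?thesis by (simp add: hh0 hh'_def)
qed

lemma opt_val_lim: "opt_val \<longlonglongrightarrow> 1/2"
proof -
  have e: "2 * exp (- (2 * ln 2)) = (1/2::real)"
  proof -
    have "exp (2 * ln (2::real)) = exp (ln 2) * exp (ln 2)" by (simp only: mult_2 exp_add)
    also have "\<dots> = 4" by simp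
    finally have "exp (2 * ln (2::real)) = 4" .
    thus ?thesis by (simp add: exp_minus)
  qed
  have "((\<lambda>m. hh (1/(real m - 1)) / (1/(real m - 1))) \<longlongrightarrow> 2 * ln 2) sequentially"
    by (rule filterlim_compose[OF hh_quot tm_lim])
  hence "((\<lambda>m. 2 * exp (- (hh (1/(real m - 1)) / (1/(real m - 1))))) \<longlongrightarrow> 2 * exp (- (2 * ln 2))) sequentially"
    by (intro tendsto_intros)
  hence "((\<lambda>m. 2 * exp (- (hh (1/(real m - 1)) / (1/(real m - 1))))) \<longlongrightarrow> 1/2) sequentially"
    unfolding e .
  thus ?thesis
    by (rule Lim_transform_eventually) (use eventually_ge_at_top[of 2] in \<open>eventually_elim, simp add: opt_val_exp\<close>)
qed


theorem mainTheorem9: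
  fixes n :: nat and p :: real
  assumes "n \<ge> 2" and "0 < p" and "p < 1/2"
  shows "(\<forall>x\<in>{0..1}. win_prob n p x = p_n n p x)
       \<and> (p \<ge> (beta n - 1) / (2 * beta n - 1) \<longrightarrow>
            x_star n p \<in> {0..1}
          \<and> (\<forall>x\<in>{0..1}. p_n n p x \<le> p_n n p (x_star n p))
          \<and> p_n n p (x_star n p) = opt_val n)
       \<and> (\<forall>m\<ge>2. opt_val (Suc m) < opt_val m)
       \<and> opt_val \<longlonglongrightarrow> 1/2"
  using win_prob_eq[OF assms(2,3)] part2[OF assms] opt_val_dec opt_val_lim by auto

end
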